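(* Let $(A,d)$ be a metric space and $\rho:[0,1]\to[0,1]$ an ndrc grey level map with $\rho(0)=0$. Then for all $u,v\in\mathcal F_A^*$, $$\sup_{\alpha\in[0,1]}h([\rho(u)]^\alpha,[\rho(v)]^\alpha)\le d_\infty(u,v),$$ with the convention $h(\emptyset,\emptyset)=0$ (for $\alpha>\rho(1)$ both $\alpha$-cuts are empty); i.e. $d_\infty(\rho(u),\rho(v))\le d_\infty(u,v)$.
   Context: A fuzzy subset of $A$ is a function $u:A\to[0,1]$. For $\alpha\in(0,1]$, $[u]^\alpha=\{x:u(x)\ge\alpha\}$, $[u]^0=\overline{\{x:u(x)>0\}}$. $\mathcal F_A^*$ is the set of fuzzy subsets that are normal, usc and compactly supported. $h$ is the Hausdorff metric on nonempty compact sets and $d_\infty(u,v)=\sup_{\alpha\in[0,1]}h([u]^\alpha,[v]^\alpha)$. A grey level map is a non-identically-zero $\rho:[0,1]\to[0,1]$; ndrc means nondecreasing and right continuous; $\rho(u)=\rho\circ u$. *)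

theory Defs
  imports "HOL-Analysis.Analysis"
begin

definition hausdorff_dist :: "'a::metric_space set \<Rightarrow> 'a set \<Rightarrow> real" where
  "hausdorff_dist S T =
     (if S = {} \<and> T = {} then 0
      else max (SUP x\<in>S. infdist x T) (SUP y\<in>T. infdist y S))"

definition cut :: "('a::topological_space \<Rightarrow> real) \<Rightarrow> real \<Rightarrow> 'a set" where
  "cut u \<alpha> = (if \<alpha> = 0 then closure {x. u x > 0} else {x. u x \<ge> \<alpha>})"

definition fuzzy_set :: "('a \<Rightarrow> real) \<Rightarrow> bool" where
  "fuzzy_set u \<longleftrightarrow> (\<forall>x. 0 \<le> u x \<and> u x \<le> 1)"

text \<open>The class F*_A: normal, upper semicontinuous, compactly supported fuzzy sets.\<close>
definition fuzzy_star :: "('a::metric_space \<Rightarrow> real) set" where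
  "fuzzy_star = {u. fuzzy_set u
      \<and> (\<exists>x. u x = 1)
      \<and> (\<forall>a. closed {x. u x \<ge> a})
      \<and> compact (closure {x. u x > 0})}"

definition d_infty :: "('a::metric_space \<Rightarrow> real) \<Rightarrow> ('a \<Rightarrow> real) \<Rightarrow> real" where
  "d_infty u v = (SUP \<alpha>\<in>{0..1}. hausdorff_dist (cut u \<alpha>) (cut v \<alpha>))"

definition grey_level_map :: "(real \<Rightarrow> real) \<Rightarrow> bool" where
  "grey_level_map \<rho> \<longleftrightarrow> \<rho> ` {0..1} \<subseteq> {0..1} \<and> (\<exists>t\<in>{0..1}. \<rho> t \<noteq> 0)"

definition ndrc :: "(real \<Rightarrow> real) \<Rightarrow> bool" where
  "ndrc \<rho> \<longleftrightarrow> mono_on {0..1} \<rho> \<and> (\<forall>t\<in>{0..1}. continuous (at t within {t..1}) \<rho>)"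

end

theory Submission
  imports Defs
begin

lemma hd_bounds:
  fixes S T K :: "'a::metric_space set"
  assumes "S \<noteq> {}" "T \<noteq> {}" "S \<union> T \<subseteq> K" "bounded K"
  shows "0 \<le> hausdorff_dist S T \<and> hausdorff_dist S T \<le> diameter K
         \<and> (\<forall>x\<in>S. infdist x T \<le> hausdorff_dist S T)"
proof -
  obtain t where t: "t \<in> T" using assms by auto
  obtain s where s: "s \<in> S" using assms by auto
  have b1: "\<And>x. x \<in> S \<Longrightarrow> infdist x T \<le> diameter K"
  proof -
    fix x assume x: "x \<in> S"
    have "infdist x T \<le> dist x t" using t by (rule infdist_le)
    also have "\<dots> \<le> diameter K" using assms x t by (intro diameter_bounded_bound) auto
    finally show "infdist x T \<le> diameter K" .
  qed
  have b2: "\<And>y. y \<in> T \<Longrightarrow> infdist y S \<le> diameter K"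
  proof -
    fix y assume y: "y \<in> T"
    have "infdist y S \<le> dist y s" using s by (rule infdist_le)
    also have "\<dots> \<le> diameter K" using assms y s by (intro diameter_bounded_bound) auto
    finally show "infdist y S \<le> diameter K" .
  qed
  have bd1: "bdd_above ((\<lambda>x. infdist x T) ` S)" by (rule bdd_aboveI2[where M="diameter K"]) (rule b1)
  have bd2: "bdd_above ((\<lambda>y. infdist y S) ` T)" by (rule bdd_aboveI2[where M="diameter K"]) (rule b2)
  have up: "\<forall>x\<in>S. infdist x T \<le> (SUP x\<in>S. infdist x T)"
    using bd1 by (auto intro: cSUP_upper)
  have l1: "(SUP x\<in>S. infdist x T) \<le> diameter K" using assms(1) b1 by (intro cSUP_least) auto
  have l2: "(SUP y\<in>T. infdist y S) \<le> diameter K" using assms(2) b2 by (intro cSUP_least) auto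
  have hd: "hausdorff_dist S T = max (SUP x\<in>S. infdist x T) (SUP y\<in>T. infdist y S)"
    using assms unfolding hausdorff_dist_def by auto
  have "0 \<le> infdist s T" by (rule infdist_nonneg)
  then have "0 \<le> (SUP x\<in>S. infdist x T)" using up s by (meson order_trans)
  then show ?thesis using hd l1 l2 up by auto
qed

lemma cut_pos: "\<alpha> > 0 \<Longrightarrow> cut u \<alpha> = {x. u x \<ge> \<alpha>}"
  unfolding cut_def by auto

lemma key:
  fixes \<rho> :: "real \<Rightarrow> real" and u v :: "'a::metric_space \<Rightarrow> real"
  assumes mono: "mono_on {0..1} \<rho>" and r0: "\<rho> 0 = 0"
    and fu: "fuzzy_set u" and fv: "fuzzy_set v" and nv: "\<exists>y. v y = 1"
    and F: "\<forall>\<gamma>\<in>{0<..1}. \<forall>x\<in>cut u \<gamma>. infdist x (cut v \<gamma>) \<le> D"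
    and al: "\<alpha> \<in> {0..1}" and x: "x \<in> cut (\<rho> \<circ> u) \<alpha>"
  shows "cut (\<rho> \<circ> v) \<alpha> \<noteq> {} \<and> infdist x (cut (\<rho> \<circ> v) \<alpha>) \<le> D"
proof -
  define Sv where "Sv = cut (\<rho> \<circ> v) \<alpha>"
  have C: "Sv \<noteq> {} \<and> infdist z Sv \<le> D" if z1: "\<rho> (u z) > 0" and z2: "\<rho> (u z) \<ge> \<alpha>" for z
  proof -
    define \<gamma> where "\<gamma> = u z"
    have g01: "0 \<le> \<gamma> \<and> \<gamma> \<le> 1" using fu unfolding fuzzy_set_def \<gamma>_def by auto
    have "\<gamma> \<noteq> 0" using z1 r0 \<gamma>_def by auto
    then have g: "\<gamma> \<in> {0<..1}" using g01 by auto
    have sub: "cut v \<gamma> \<subseteq> Sv"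
    proof
      fix y assume "y \<in> cut v \<gamma>"
      then have vy: "v y \<ge> \<gamma>" using g cut_pos[of \<gamma> v] by auto
      have "v y \<le> 1" using fv unfolding fuzzy_set_def by auto
      then have "\<rho> \<gamma> \<le> \<rho> (v y)" using mono vy g01 by (intro mono_onD[OF mono]) auto
      then have p: "\<rho> (v y) > 0" "\<rho> (v y) \<ge> \<alpha>" using z1 z2 \<gamma>_def by auto
      show "y \<in> Sv"
      proof (cases "\<alpha> = 0")
        case True
        then show ?thesis unfolding Sv_def cut_def using p closure_subset by fastforce
      next
        case False
        then show ?thesis unfolding Sv_def cut_def using p by auto
      qed
    qed
    obtain y0 where "v y0 = 1" using nv by auto
    then have "y0 \<in> cut v \<gamma>" using g cut_pos[of \<gamma> v] by auto
    then have ne: "cut v \<gamma> \<noteq> {}" by auto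
    have "z \<in> cut u \<gamma>" using g cut_pos[of \<gamma> u] \<gamma>_def by auto
    then have "infdist z (cut v \<gamma>) \<le> D" using F g by auto
    moreover have "infdist z Sv \<le> infdist z (cut v \<gamma>)" using sub ne by (rule infdist_mono)
    ultimately show ?thesis using sub ne by auto
  qed
  show ?thesis
  proof (cases "\<alpha> = 0")
    case False
    then have "\<alpha> > 0" using al by auto
    then have "\<rho> (u x) \<ge> \<alpha>" using x cut_pos[of \<alpha> "\<rho> \<circ> u"] by auto
    then show ?thesis using C[of x] \<open>\<alpha> > 0\<close> Sv_def by auto
  next
    case True
    define U where "U = {z. \<rho> (u z) > 0}"
    have xU: "x \<in> closure U" using x True unfolding U_def cut_def by auto
    then have "U \<noteq> {}" by auto
    then obtain z where "z \<in> U" by auto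
    then have ne: "Sv \<noteq> {}" using C[of z] True U_def by auto
    have "U \<subseteq> {z. infdist z Sv \<le> D}" using C True U_def by auto
    moreover have "closed {z. infdist z Sv \<le> D}"
      by (intro closed_Collect_le continuous_intros) 
    ultimately have "closure U \<subseteq> {z. infdist z Sv \<le> D}" by (rule closure_minimal)
    then show ?thesis using xU ne Sv_def by auto
  qed
qed

theorem mainTheorem10:
  fixes \<rho> :: "real \<Rightarrow> real" and u v :: "'a::metric_space \<Rightarrow> real"
  assumes "grey_level_map \<rho>" and "ndrc \<rho>" and "\<rho> 0 = 0"
    and "u \<in> fuzzy_star" and "v \<in> fuzzy_star"
  shows "(SUP \<alpha>\<in>{0..1}. hausdorff_dist (cut (\<rho> \<circ> u) \<alpha>) (cut (\<rho> \<circ> v) \<alpha>)) \<le> d_infty u v"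
proof -
  define D where "D = d_infty u v"
  have mono: "mono_on {0..1} \<rho>" using assms(2) unfolding ndrc_def by auto
  have fu: "fuzzy_set u" and nu: "\<exists>y. u y = 1" and cu: "compact (closure {x. u x > 0})"
    using assms(4) unfolding fuzzy_star_def by auto
  have fv: "fuzzy_set v" and nv: "\<exists>y. v y = 1" and cv: "compact (closure {x. v x > 0})"
    using assms(5) unfolding fuzzy_star_def by auto
  define K where "K = closure {x. u x > 0} \<union> closure {x. v x > 0}"
  have bK: "bounded K" unfolding K_def using cu cv by (intro bounded_Un compact_imp_bounded) auto
  have sub: "cut w \<alpha> \<subseteq> closure {x. w x > 0}" if "\<alpha> \<in> {0..1}" for w :: "'a \<Rightarrow> real" and \<alpha>
  proof (cases "\<alpha> = 0")
    case True then show ?thesis unfolding cut_def by simp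
  next
    case False
    then have "cut w \<alpha> \<subseteq> {x. w x > 0}" using that unfolding cut_def by auto
    then show ?thesis using closure_subset[of "{x. w x > 0}"] by blast
  qed
  have ne: "cut w \<alpha> \<noteq> {}" if a1: "\<alpha> \<in> {0..1}" and a2: "\<exists>y. w y = 1" for w :: "'a \<Rightarrow> real" and \<alpha>
  proof -
    obtain y where y: "w y = 1" using a2 by blast
    have "y \<in> cut w \<alpha>"
    proof (cases "\<alpha> = 0")
      case True then show ?thesis using y closure_subset[of "{x. w x > 0}"] unfolding cut_def by auto
    next
      case False then show ?thesis using y a1 unfolding cut_def by auto
    qed
    then show ?thesis by auto
  qed
  have HB: "0 \<le> hausdorff_dist (cut u \<alpha>) (cut v \<alpha>) \<and> hausdorff_dist (cut u \<alpha>) (cut v \<alpha>) \<le> diameter K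
         \<and> (\<forall>x\<in>cut u \<alpha>. infdist x (cut v \<alpha>) \<le> hausdorff_dist (cut u \<alpha>) (cut v \<alpha>))
         \<and> (\<forall>x\<in>cut v \<alpha>. infdist x (cut u \<alpha>) \<le> hausdorff_dist (cut v \<alpha>) (cut u \<alpha>))"
    if a: "\<alpha> \<in> {0..1}" for \<alpha>
  proof -
    have s: "cut u \<alpha> \<union> cut v \<alpha> \<subseteq> K" using sub[OF a, of u] sub[OF a, of v] K_def by auto
    have "cut v \<alpha> \<union> cut u \<alpha> \<subseteq> K" using s by auto
    then have h2: "\<forall>x\<in>cut v \<alpha>. infdist x (cut u \<alpha>) \<le> hausdorff_dist (cut v \<alpha>) (cut u \<alpha>)"
      using hd_bounds[OF ne[OF a nv] ne[OF a nu] _ bK] by blast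
    show ?thesis using hd_bounds[OF ne[OF a nu] ne[OF a nv] s bK] h2 by blast
  qed
  have symm: "hausdorff_dist S T = hausdorff_dist T S" for S T :: "'a set"
    unfolding hausdorff_dist_def by (simp add: max.commute conj_commute)
  have bdd: "bdd_above ((\<lambda>\<alpha>. hausdorff_dist (cut u \<alpha>) (cut v \<alpha>)) ` {0..1})"
    by (rule bdd_aboveI2[where M="diameter K"]) (use HB in auto)
  have F1: "hausdorff_dist (cut u \<alpha>) (cut v \<alpha>) \<le> D" if "\<alpha> \<in> {0..1}" for \<alpha>
    unfolding D_def d_infty_def using bdd that by (rule cSUP_upper2) auto
  have D0: "0 \<le> D" using HB[of 1] F1[of 1] by auto
  have Fu: "\<forall>\<gamma>\<in>{0<..1}. \<forall>x\<in>cut u \<gamma>. infdist x (cut v \<gamma>) \<le> D"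
  proof (intro ballI)
    fix \<gamma> x assume g: "\<gamma> \<in> {0<..1}" and x: "x \<in> cut u \<gamma>"
    then have a: "\<gamma> \<in> {0..1}" by auto
    have "infdist x (cut v \<gamma>) \<le> hausdorff_dist (cut u \<gamma>) (cut v \<gamma>)" using HB[OF a] x by blast
    then show "infdist x (cut v \<gamma>) \<le> D" using F1[OF a] by linarith
  qed
  have Fv: "\<forall>\<gamma>\<in>{0<..1}. \<forall>x\<in>cut v \<gamma>. infdist x (cut u \<gamma>) \<le> D"
  proof (intro ballI)
    fix \<gamma> x assume g: "\<gamma> \<in> {0<..1}" and x: "x \<in> cut v \<gamma>"
    then have a: "\<gamma> \<in> {0..1}" by auto
    have "infdist x (cut u \<gamma>) \<le> hausdorff_dist (cut v \<gamma>) (cut u \<gamma>)" using HB[OF a] x by blast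
    also have "\<dots> = hausdorff_dist (cut u \<gamma>) (cut v \<gamma>)" by (rule symm)
    finally show "infdist x (cut u \<gamma>) \<le> D" using F1[OF a] by linarith
  qed
  show ?thesis unfolding D_def[symmetric]
  proof (rule cSUP_least)
    show "{0..1::real} \<noteq> {}" by auto
  next
    fix \<alpha> :: real assume a: "\<alpha> \<in> {0..1}"
    define Su where "Su = cut (\<rho> \<circ> u) \<alpha>"
    define Sv where "Sv = cut (\<rho> \<circ> v) \<alpha>"
    have K1: "\<forall>x\<in>Su. Sv \<noteq> {} \<and> infdist x Sv \<le> D"
      unfolding Su_def Sv_def using key[OF mono assms(3) fu fv nv Fu a] by blast
    have K2: "\<forall>x\<in>Sv. Su \<noteq> {} \<and> infdist x Su \<le> D"
      unfolding Su_def Sv_def using key[OF mono assms(3) fv fu nu Fv a] by blast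
    show "hausdorff_dist Su Sv \<le> D"
    proof (cases "Su = {}")
      case True
      then have "Sv = {}" using K2 by auto
      then show ?thesis using True D0 unfolding hausdorff_dist_def by auto
    next
      case False
      then have "Sv \<noteq> {}" using K1 by auto
      have l1: "(SUP x\<in>Su. infdist x Sv) \<le> D" using False K1 by (intro cSUP_least) auto
      have l2: "(SUP x\<in>Sv. infdist x Su) \<le> D" using \<open>Sv \<noteq> {}\<close> K2 by (intro cSUP_least) auto
      show ?thesis using l1 l2 False unfolding hausdorff_dist_def by auto
    qed
  qed
qed

end
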